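(* Let $\mathbf i\in\mathbb C$ with $\mathbf i^2=-1$ and let $\beta_m=[x^m]\Big(\frac{1+x}{1+\mathbf i}\prod_{k=0}^\infty\big(1+\mathbf i\,x^{2^k}\big)\Big)$ for $m\ge0$. For $n\ge1$, let $H(n)$ be the $n\times n$ Hankel matrix with entries $H(n)_{a,b}=\beta_{a+b+1}$, $0\le a,b<n$. Then $\det(H(n))=(-\mathbf i)^{\lfloor n/2\rfloor}$.
   Context: $[x^m]f$ denotes the coefficient of $x^m$ in the formal power series $f\in\mathbb C[[x]]$. *)

theory Defs
  imports "HOL-Computational_Algebra.Formal_Power_Series" "Jordan_Normal_Form.Determinant"
begin

definition tm_prod :: "complex fps" where
  "tm_prod = lim (\<lambda>N. \<Prod>k<N. (1 + fps_const \<i> * fps_X ^ (2 ^ k)))"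

definition beta_fps :: "complex fps" where
  "beta_fps = fps_const (1 / (1 + \<i>)) * (1 + fps_X) * tm_prod"

definition beta :: "nat \<Rightarrow> complex" where
  "beta m = fps_nth beta_fps m"

definition hankelH :: "nat \<Rightarrow> complex mat" where
  "hankelH n = mat n n (\<lambda>(a, b). beta (a + b + 1))"

end

theory Submission
  imports Defs
begin

function tt :: "nat \<Rightarrow> complex" where
  "tt 0 = 1"
| "tt (Suc n) = (if even (Suc n) then tt (Suc n div 2) else \<i> * tt (Suc n div 2))"
  by pat_completeness auto
termination
  apply (relation "measure id")
    apply auto
  apply presburger
  done

declare tt.simps[simp del]

lemma tt_0[simp]: "tt 0 = 1" by (rule tt.simps(1))

lemma tt_even: "tt (2*m) = tt m"
proof (cases m)
  case 0 then show ?thesis by simp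
next
  case (Suc k)
  have "tt (2*m) = tt (Suc (2*k+1))" using Suc by simp
  also have "\<dots> = tt (Suc (2*k+1) div 2)" by (subst tt.simps(2)) simp
  also have "Suc (2*k+1) div 2 = m" using Suc by simp
  finally show ?thesis .
qed

lemma tt_odd: "tt (2*m+1) = \<i> * tt m"
proof -
  have "tt (2*m+1) = tt (Suc (2*m))" by simp
  also have "\<dots> = \<i> * tt (Suc (2*m) div 2)" by (subst tt.simps(2)) simp
  finally show ?thesis by simp
qed

lemma tt_odd_Suc[simp]: "tt (Suc (2*m)) = \<i> * tt m"
  using tt_odd[of m] by simp

declare tt_even[simp]

lemma tt_even_SS[simp]: "tt (Suc (Suc (2*m))) = tt (Suc m)"
  using tt_even[of "Suc m"] by simp

lemma tt_odd_SSS[simp]: "tt (Suc (Suc (Suc (2*m)))) = \<i> * tt (Suc m)"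
  using tt_odd_Suc[of "Suc m"] by simp

lemma tt_even_SSSS[simp]: "tt (Suc (Suc (Suc (Suc (2*m))))) = tt (Suc (Suc m))"
  using tt_even[of "Suc (Suc m)"] by simp

lemma tt_pow2: "r < 2^N \<Longrightarrow> tt (2^N + r) = \<i> * tt r"
proof (induction N arbitrary: r)
  case 0
  then show ?case using tt_odd[of 0] by simp
next
  case (Suc N)
  obtain q b where r: "r = 2*q + b" and b: "b < 2" by (metis mod_less_divisor mult_div_mod_eq zero_less_numeral)
  have q: "q < 2^N" using Suc.prems r by auto
  show ?case
  proof (cases "b = 0")
    case True
    have "tt (2^Suc N + r) = tt (2*(2^N+q))" using r True by (simp add: algebra_simps)
    also have "\<dots> = \<i> * tt q" by (simp only: tt_even Suc.IH[OF q])
    finally show ?thesis using r True tt_even by simp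
  next
    case False
    then have b1: "b = 1" using b by auto
    have "tt (2^Suc N + r) = tt (2*(2^N+q)+1)" using r b1 by (simp add: algebra_simps)
    also have "\<dots> = \<i> * (\<i> * tt q)" by (simp only: tt_odd Suc.IH[OF q])
    finally show ?thesis using r b1 tt_odd by simp
  qed
qed

definition pp :: "nat \<Rightarrow> complex fps" where
  "pp N = (\<Prod>k<N. (1 + fps_const \<i> * fps_X ^ (2 ^ k)))"

lemma pp_nth: "fps_nth (pp N) m = (if m < 2^N then tt m else 0)"
proof (induction N arbitrary: m)
  case 0
  then show ?case by (simp add: pp_def)
next
  case (Suc N)
  have "pp (Suc N) = pp N + fps_const \<i> * (pp N * fps_X ^ (2^N))"
    by (simp add: pp_def algebra_simps)
  then have "fps_nth (pp (Suc N)) m = fps_nth (pp N) m + \<i> * (if m < 2^N then 0 else fps_nth (pp N) (m - 2^N))"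
    by (simp add: fps_X_power_mult_right_nth)
  also have "\<dots> = (if m < 2^Suc N then tt m else 0)"
  proof (cases "m < 2^N")
    case True
    then show ?thesis using Suc.IH by simp
  next
    case False
    show ?thesis
    proof (cases "m < 2^Suc N")
      case True
      have r: "m - 2^N < 2^N" using True False by simp
      have "tt m = tt (2^N + (m - 2^N))" using False by simp
      also have "\<dots> = \<i> * tt (m - 2^N)" by (rule tt_pow2[OF r])
      finally show ?thesis using Suc.IH False True r by simp
    next
      case F2: False
      then show ?thesis using Suc.IH False by simp
    qed
  qed
  finally show ?case .
qed

lemma tm_prod_eq: "tm_prod = Abs_fps tt"
proof -
  have "(\<lambda>N. pp N) \<longlonglongrightarrow> Abs_fps tt"
  proof (rule tendsto_fpsI)
    fix n
    have "eventually (\<lambda>N. n < (2::nat)^N) sequentially"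
      unfolding eventually_sequentially
      by (intro exI[of _ n] allI impI) (meson less_exp less_le_trans one_le_numeral power_increasing)
    then show "eventually (\<lambda>N. fps_nth (pp N) n = fps_nth (Abs_fps tt) n) sequentially"
      by eventually_elim (simp add: pp_nth)
  qed
  then show ?thesis unfolding tm_prod_def pp_def[symmetric] by (rule limI)
qed

lemma beta_eq: "beta (Suc k) = (tt k + tt (Suc k)) / (1 + \<i>)"
proof -
  have h: "beta_fps = fps_const (1 / (1 + \<i>)) * (Abs_fps tt + fps_X * Abs_fps tt)"
    unfolding beta_fps_def tm_prod_eq by (simp add: algebra_simps)
  have "beta (Suc k) = (1 / (1 + \<i>)) * (tt (Suc k) + tt k)"
    unfolding beta_def h by (simp only: fps_mult_left_const_nth fps_add_nth fps_X_mult_nth) simp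
  then show ?thesis by (simp add: field_simps)
qed

definition hk :: "nat \<Rightarrow> nat \<Rightarrow> (nat \<Rightarrow> complex) \<Rightarrow> complex mat" where
  "hk r c s = mat r c (\<lambda>(i,j). s (i+j))"

lemma hankelH_eq: "hankelH n = (1 / (1 + \<i>)) \<cdot>\<^sub>m hk n n (\<lambda>k. tt k + tt (Suc k))"
  unfolding hankelH_def hk_def
  by (rule eq_matI) (auto simp: beta_eq)

lemma det_colU:
  fixes A :: "complex mat"
  assumes A: "A \<in> carrier_mat n n" and B: "B \<in> carrier_mat n m"
    and C: "C \<in> carrier_mat m n" and D: "D \<in> carrier_mat m m" and X: "X \<in> carrier_mat n m"
  shows "det (four_block_mat A B C D) = det (four_block_mat A (A*X + B) C (C*X + D))"
proof -
  let ?R = "four_block_mat (1\<^sub>m n) X (0\<^sub>m m n) (1\<^sub>m m)"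
  have R: "?R \<in> carrier_mat (n+m) (n+m)" using X by auto
  have dR: "det ?R = 1" by (subst det_four_block_mat_lower_left_zero[of _ n _ m]) (use X in auto)
  have "four_block_mat A B C D * ?R = four_block_mat (A * 1\<^sub>m n + B * 0\<^sub>m m n) (A * X + B * 1\<^sub>m m)
     (C * 1\<^sub>m n + D * 0\<^sub>m m n) (C * X + D * 1\<^sub>m m)"
    by (rule mult_four_block_mat[OF A B C D]) (use X in auto)
  also have "\<dots> = four_block_mat A (A*X + B) C (C*X + D)"
    using A B C D X by simp
  finally have eq: "four_block_mat A B C D * ?R = four_block_mat A (A*X + B) C (C*X + D)" .
  have M: "four_block_mat A B C D \<in> carrier_mat (n+m) (n+m)" using A B C D by auto
  show ?thesis using det_mult[OF M R] dR eq by simp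
qed

lemma det_colL:
  fixes A :: "complex mat"
  assumes A: "A \<in> carrier_mat n n" and B: "B \<in> carrier_mat n m"
    and C: "C \<in> carrier_mat m n" and D: "D \<in> carrier_mat m m" and Y: "Y \<in> carrier_mat m n"
  shows "det (four_block_mat A B C D) = det (four_block_mat (A + B*Y) B (C + D*Y) D)"
proof -
  let ?R = "four_block_mat (1\<^sub>m n) (0\<^sub>m n m) Y (1\<^sub>m m)"
  have R: "?R \<in> carrier_mat (n+m) (n+m)" using Y by auto
  have dR: "det ?R = 1" by (subst det_four_block_mat_upper_right_zero[of _ n _ m]) (use Y in auto)
  have "four_block_mat A B C D * ?R = four_block_mat (A * 1\<^sub>m n + B * Y) (A * 0\<^sub>m n m + B * 1\<^sub>m m)
     (C * 1\<^sub>m n + D * Y) (C * 0\<^sub>m n m + D * 1\<^sub>m m)"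
    by (rule mult_four_block_mat[OF A B C D]) (use Y in auto)
  also have "\<dots> = four_block_mat (A + B*Y) B (C + D*Y) D"
    using A B C D Y by simp
  finally have eq: "four_block_mat A B C D * ?R = four_block_mat (A + B*Y) B (C + D*Y) D" .
  have M: "four_block_mat A B C D \<in> carrier_mat (n+m) (n+m)" using A B C D by auto
  show ?thesis using det_mult[OF M R] dR eq by simp
qed

lemma det_rowL:
  fixes A :: "complex mat"
  assumes A: "A \<in> carrier_mat n n" and B: "B \<in> carrier_mat n m"
    and C: "C \<in> carrier_mat m n" and D: "D \<in> carrier_mat m m" and Y: "Y \<in> carrier_mat m n"
  shows "det (four_block_mat A B C D) = det (four_block_mat A B (Y*A + C) (Y*B + D))"
proof -
  let ?L = "four_block_mat (1\<^sub>m n) (0\<^sub>m n m) Y (1\<^sub>m m)"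
  have L: "?L \<in> carrier_mat (n+m) (n+m)" using Y by auto
  have dL: "det ?L = 1" by (subst det_four_block_mat_upper_right_zero[of _ n _ m]) (use Y in auto)
  have "?L * four_block_mat A B C D = four_block_mat (1\<^sub>m n * A + 0\<^sub>m n m * C) (1\<^sub>m n * B + 0\<^sub>m n m * D)
     (Y * A + 1\<^sub>m m * C) (Y * B + 1\<^sub>m m * D)"
    by (rule mult_four_block_mat) (use A B C D Y in auto)
  also have "\<dots> = four_block_mat A B (Y*A + C) (Y*B + D)"
    using A B C D Y by simp
  finally have eq: "?L * four_block_mat A B C D = four_block_mat A B (Y*A + C) (Y*B + D)" .
  have M: "four_block_mat A B C D \<in> carrier_mat (n+m) (n+m)" using A B C D by auto
  show ?thesis using det_mult[OF L M] dL eq by simp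
qed

definition pv :: "nat \<Rightarrow> nat \<Rightarrow> nat" where
  "pv n i = (if i < (n+1) div 2 then 2*i else if i < n then 2*(i - (n+1) div 2) + 1 else i)"

lemma pv_permutes: "pv n permutes {0..<n}"
proof (rule bij_imp_permutes)
  have inj: "inj_on (pv n) {0..<n}" unfolding inj_on_def pv_def
    by (auto split: if_splits; presburger)
  have sub: "pv n ` {0..<n} \<subseteq> {0..<n}" unfolding pv_def
    by (auto; presburger)
  show "bij_betw (pv n) {0..<n} {0..<n}"
    using bij_betw_imageI[OF inj endo_inj_surj[OF _ sub inj]] by auto
  show "x \<notin> {0..<n} \<Longrightarrow> pv n x = x" for x by (simp add: pv_def)
qed

lemma det_sym_perm:
  fixes A :: "complex mat"
  assumes A: "A \<in> carrier_mat n n" and p: "p permutes {0..<n}"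
  shows "det (mat n n (\<lambda>(i,j). A $$ (p i, p j))) = det A"
proof -
  define B where "B = mat n n (\<lambda>(i,j). A $$ (p i, j))"
  have dB: "det B = signof p * det A" unfolding B_def by (rule det_permute_rows[OF A p])
  have Bc: "B \<in> carrier_mat n n" unfolding B_def by simp
  define C where "C = mat n n (\<lambda>(i,j). (transpose_mat B) $$ (p i, j))"
  have dC: "det C = signof p * det (transpose_mat B)" unfolding C_def
    by (rule det_permute_rows[OF _ p]) (use Bc in simp)
  have pn: "i < n \<Longrightarrow> p i < n" for i using permutes_in_image[OF p] by simp
  have eq: "mat n n (\<lambda>(i,j). A $$ (p i, p j)) = transpose_mat C"
    by (rule eq_matI) (auto simp: C_def B_def pn)
  have Cc: "C \<in> carrier_mat n n" unfolding C_def by simp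
  have s: "signof p * signof p = (1::complex)" using signof_pm_one[of p] by (auto simp: sign_def)
  show ?thesis unfolding eq det_transpose[OF Cc] dC det_transpose[OF Bc] dB
    by (simp add: mult.assoc[symmetric] s)
qed

lemma hk_carrier[simp]: "hk r c s \<in> carrier_mat r c" by (simp add: hk_def)
lemma hk_index[simp]: "i < r \<Longrightarrow> j < c \<Longrightarrow> hk r c s $$ (i,j) = s (i+j)" by (simp add: hk_def)
lemma hk_dims[simp]: "dim_row (hk r c s) = r" "dim_col (hk r c s) = c" by (simp_all add: hk_def)

lemma hk_split:
  assumes k: "k = (n+1) div 2" and m: "m = n div 2"
  shows "det (hk n n s) = det (four_block_mat (hk k k (\<lambda>j. s (2*j))) (hk k m (\<lambda>j. s (2*j+1)))
      (hk m k (\<lambda>j. s (2*j+1))) (hk m m (\<lambda>j. s (2*j+2))))"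
proof -
  have km: "k + m = n" using k m by simp
  have eq: "four_block_mat (hk k k (\<lambda>j. s (2*j))) (hk k m (\<lambda>j. s (2*j+1)))
      (hk m k (\<lambda>j. s (2*j+1))) (hk m m (\<lambda>j. s (2*j+2))) = mat n n (\<lambda>(i,j). hk n n s $$ (pv n i, pv n j))"
  proof (rule eq_matI)
    fix i j assume i: "i < dim_row (mat n n (\<lambda>(i,j). hk n n s $$ (pv n i, pv n j)))"
      and j: "j < dim_col (mat n n (\<lambda>(i,j). hk n n s $$ (pv n i, pv n j)))"
    have i': "i < n" and j': "j < n" using i j by auto
    have pi: "pv n i < n" and pj: "pv n j < n" using permutes_in_image[OF pv_permutes] i' j' by auto
    have pvi: "pv n i = (if i < k then 2*i else 2*(i-k)+1)" using i' k by (simp add: pv_def)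
    have pvj: "pv n j = (if j < k then 2*j else 2*(j-k)+1)" using j' k by (simp add: pv_def)
    show "four_block_mat (hk k k (\<lambda>j. s (2*j))) (hk k m (\<lambda>j. s (2*j+1)))
      (hk m k (\<lambda>j. s (2*j+1))) (hk m m (\<lambda>j. s (2*j+2))) $$ (i, j) =
      mat n n (\<lambda>(i,j). hk n n s $$ (pv n i, pv n j)) $$ (i, j)"
      using i' j' pi pj km
      apply (subst index_mat_four_block)
        apply (simp_all add: pvi pvj)
      apply (intro conjI impI; rule arg_cong[of _ _ s]; simp)
      done
  qed (use km in auto)
  show ?thesis unfolding eq by (rule det_sym_perm[symmetric, OF _ pv_permutes]) simp
qed

lemma sum_bidiag:
  fixes f :: "nat \<Rightarrow> complex"
  assumes q: "q < k"
  shows "(\<Sum>r\<in>{0..<k}. f r * (if r = q then x else if r = q+1 then y else 0))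
     = x * f q + (if q+1 < k then y * f (q+1) else 0)"
proof -
  have "(\<lambda>r. f r * (if r = q then x else if r = q+1 then y else 0)) =
     (\<lambda>r. (if r = q then x * f r else 0) + (if r = q+1 then y * f r else 0))" by auto
  then have "(\<Sum>r\<in>{0..<k}. f r * (if r = q then x else if r = q+1 then y else 0)) =
    (\<Sum>r\<in>{0..<k}. (if r = q then x * f r else 0)) + (\<Sum>r\<in>{0..<k}. (if r = q+1 then y * f r else 0))"
    by (simp only: sum.distrib[symmetric])
  also have "\<dots> = x * f q + (if q+1 < k then y * f (q+1) else 0)"
    using q by (simp add: sum.delta')
  finally show ?thesis .
qed

lemma det_elim:
  assumes k: "k = (n+1) div 2" and m: "m = n div 2"
    and orel: "\<And>j. s (2*j+1) = a * s (2*j) + b * s (2*j+2)"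
    and bm: "b = 0 \<or> m < k"
  shows "det (hk n n s) = det (hk k k (\<lambda>j. s (2*j))) *
     det (hk m m (\<lambda>j. s (2*j+2) - a * s (2*j+1) - b * s (2*j+3)))"
proof -
  define X where "X = mat k m (\<lambda>(r,q). if r = q then -a else if r = q+1 then -b else 0)"
  have mk: "m \<le> k" using k m by simp
  have X: "X \<in> carrier_mat k m" by (simp add: X_def)
  let ?A = "hk k k (\<lambda>j. s (2*j))"
  let ?B = "hk k m (\<lambda>j. s (2*j+1))"
  let ?C = "hk m k (\<lambda>j. s (2*j+1))"
  let ?D = "hk m m (\<lambda>j. s (2*j+2))"
  let ?D' = "hk m m (\<lambda>j. s (2*j+2) - a * s (2*j+1) - b * s (2*j+3))"
  have e1: "?A * X + ?B = 0\<^sub>m k m"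
  proof (rule eq_matI)
    fix p q assume p: "p < dim_row (0\<^sub>m k m :: complex mat)" and q: "q < dim_col (0\<^sub>m k m :: complex mat)"
    have p': "p < k" and q': "q < m" using p q by auto
    have qk: "q < k" using q' mk by simp
    have "(?A * X) $$ (p,q) = (\<Sum>r\<in>{0..<k}. s (2*(p+r)) * (if r = q then -a else if r = q+1 then -b else 0))"
      using p' q' by (simp add: scalar_prod_def X_def)
    also have "\<dots> = -a * s (2*(p+q)) + (if q+1 < k then -b * s (2*(p+(q+1))) else 0)"
      by (rule sum_bidiag[OF qk])
    also have "\<dots> = -a * s (2*(p+q)) - b * s (2*(p+q)+2)"
    proof -
      have ar: "2*(p+(q+1)) = 2*(p+q)+2" by simp
      show ?thesis using bm q' by (auto simp only: ar) auto
    qed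
    finally have "(?A * X) $$ (p,q) = -a * s (2*(p+q)) - b * s (2*(p+q)+2)" .
    moreover have "?B $$ (p,q) = a * s (2*(p+q)) + b * s (2*(p+q)+2)"
      using p' q' orel[of "p+q"] by simp
    ultimately show "(?A * X + ?B) $$ (p,q) = 0\<^sub>m k m $$ (p,q)"
      using p' q' X by simp
  qed auto
  have e2: "?C * X + ?D = ?D'"
  proof (rule eq_matI)
    fix p q assume p: "p < dim_row ?D'" and q: "q < dim_col ?D'"
    have p': "p < m" and q': "q < m" using p q by auto
    have qk: "q < k" using q' mk by simp
    have "(?C * X) $$ (p,q) = (\<Sum>r\<in>{0..<k}. s (2*(p+r)+1) * (if r = q then -a else if r = q+1 then -b else 0))"
      using p' q' by (simp add: scalar_prod_def X_def)
    also have "\<dots> = -a * s (2*(p+q)+1) + (if q+1 < k then -b * s (2*(p+(q+1))+1) else 0)"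
      by (rule sum_bidiag[OF qk])
    also have "\<dots> = -a * s (2*(p+q)+1) - b * s (2*(p+q)+3)"
    proof -
      have ar: "2*(p+(q+1))+1 = 2*(p+q)+3" by simp
      show ?thesis using bm q' by (auto simp only: ar) auto
    qed
    finally have "(?C * X) $$ (p,q) = -a * s (2*(p+q)+1) - b * s (2*(p+q)+3)" .
    then show "(?C * X + ?D) $$ (p,q) = ?D' $$ (p,q)"
      using p' q' X by simp
  qed auto
  have "det (hk n n s) = det (four_block_mat ?A ?B ?C ?D)" by (rule hk_split[OF k m])
  also have "\<dots> = det (four_block_mat ?A (?A * X + ?B) ?C (?C * X + ?D))"
    by (rule det_colU[OF _ _ _ _ X]) auto
  also have "\<dots> = det ?A * det ?D'"
    unfolding e1 e2 by (rule det_four_block_mat_upper_right_zero[of _ k _ m]) auto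
  finally show ?thesis .
qed

lemma hk_smult: "c \<cdot>\<^sub>m hk r q f = hk r q (\<lambda>j. c * f j)"
  by (rule eq_matI) auto

lemma hk_add: "hk r q f + hk r q g = hk r q (\<lambda>j. f j + g j)"
  by (rule eq_matI) auto

lemma mult_smult_one_right: "A \<in> carrier_mat r N \<Longrightarrow> A * (c \<cdot>\<^sub>m 1\<^sub>m N) = c \<cdot>\<^sub>m (A :: complex mat)"
  by (subst mult_smult_distrib[of A r N "1\<^sub>m N" N]) auto

lemma mult_smult_one_left: "A \<in> carrier_mat N r \<Longrightarrow> (c \<cdot>\<^sub>m 1\<^sub>m N) * A = c \<cdot>\<^sub>m (A :: complex mat)"
  by (subst mult_smult_assoc_mat[of "1\<^sub>m N" N N A r]) auto

definition Pe :: "complex \<Rightarrow> nat \<Rightarrow> complex" where "Pe e k = tt k + e * tt (Suc k)"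
definition Vs :: "nat \<Rightarrow> complex" where "Vs k = tt (k+2) - tt k"

lemma det_hk_smult: "det (hk n n (\<lambda>j. c * f j)) = c ^ n * det (hk n n f)"
  by (simp add: hk_smult[symmetric])

lemma T_rec: "det (hk n n tt) = det (hk ((n+1) div 2) ((n+1) div 2) tt) * det (hk (n div 2) (n div 2) (Pe 1))"
proof -
  have orel: "tt (2*j+1) = \<i> * tt (2*j) + 0 * tt (2*j+2)" for j by (simp add: tt_odd tt_even)
  have "det (hk n n tt) = det (hk ((n+1) div 2) ((n+1) div 2) (\<lambda>j. tt (2*j))) *
     det (hk (n div 2) (n div 2) (\<lambda>j. tt (2*j+2) - \<i> * tt (2*j+1) - 0 * tt (2*j+3)))"
    by (rule det_elim[OF refl refl orel]) simp
  also have "(\<lambda>j. tt (2*j)) = tt" by (simp add: tt_even)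
  also have "(\<lambda>j. tt (2*j+2) - \<i> * tt (2*j+1) - 0 * tt (2*j+3)) = Pe 1"
  proof
    fix j
    have "tt (2*j+2) = tt (Suc j)" using tt_even[of "Suc j"] by simp
    then show "tt (2*j+2) - \<i> * tt (2*j+1) - 0 * tt (2*j+3) = Pe 1 j"
      by (simp add: tt_odd Pe_def)
  qed
  finally show ?thesis .
qed

lemma V_rec: "det (hk n n Vs) = (-1) ^ ((n+1) div 2) * det (hk ((n+1) div 2) ((n+1) div 2) (Pe (-1))) * det (hk (n div 2) (n div 2) Vs)"
proof -
  have e2: "tt (2*j+2) = tt (Suc j)" for j using tt_even[of "Suc j"] by simp
  have e3: "tt (2*j+3) = \<i> * tt (Suc j)" for j
  proof -
    have "2*j+3 = 2*(Suc j)+1" by simp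
    then show ?thesis by (simp only: tt_odd)
  qed
  have e4: "tt (2*j+4) = tt (j+2)" for j
  proof -
    have "2*j+4 = 2*(j+2)" by simp
    then show ?thesis by (simp only: tt_even)
  qed
  have v1: "Vs (2*j+1) = \<i> * tt (Suc j) - \<i> * tt j" for j
  proof -
    have ar: "2*j+1+2 = 2*j+3" by simp
    show ?thesis unfolding Vs_def ar e3 tt_odd by simp
  qed
  have v0: "Vs (2*j) = tt (Suc j) - tt j" for j
    unfolding Vs_def e2 tt_even by simp
  have orel: "Vs (2*j+1) = \<i> * Vs (2*j) + 0 * Vs (2*j+2)" for j
    unfolding v1 v0 by (simp add: algebra_simps)
  have "det (hk n n Vs) = det (hk ((n+1) div 2) ((n+1) div 2) (\<lambda>j. Vs (2*j))) *
     det (hk (n div 2) (n div 2) (\<lambda>j. Vs (2*j+2) - \<i> * Vs (2*j+1) - 0 * Vs (2*j+3)))"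
    by (rule det_elim[OF refl refl orel]) simp
  also have "(\<lambda>j. Vs (2*j)) = (\<lambda>j. (-1) * Pe (-1) j)"
    by (rule ext) (simp add: v0 Pe_def)
  also have "(\<lambda>j. Vs (2*j+2) - \<i> * Vs (2*j+1) - 0 * Vs (2*j+3)) = Vs"
  proof
    fix j
    have ar: "2*j+2+2 = 2*(j::nat)+4" by simp
    have a: "Vs (2*j+2) = tt (j+2) - tt (j+1)" unfolding Vs_def ar e4 e2 by simp
    have b: "Vs (2*j+1) = \<i> * tt (j+1) - \<i> * tt j" unfolding v1 by simp
    show "Vs (2*j+2) - \<i> * Vs (2*j+1) - 0 * Vs (2*j+3) = Vs j"
      unfolding a b by (simp add: Vs_def algebra_simps)
  qed
  finally show ?thesis by (simp only: det_hk_smult)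
qed

lemma P_odd:
  assumes e: "e = 1 \<or> e = -1"
  shows "det (hk (2*N+1) (2*N+1) (Pe e)) = (1 + \<i>*e) ^ (N+1) * det (hk (N+1) (N+1) tt) *
     (-1 / (1 + \<i>*e)) ^ N * det (hk N N Vs)"
proof -
  define \<kappa> where "\<kappa> = 1 + \<i>*e"
  have k0: "\<kappa> \<noteq> 0" using e by (auto simp: \<kappa>_def complex_eq_iff)
  have p0: "Pe e (2*j) = \<kappa> * tt j" for j by (simp add: Pe_def) (simp add: \<kappa>_def algebra_simps)
  have p1: "Pe e (2*j+1) = \<i> * tt j + e * tt (Suc j)" for j by (simp add: Pe_def)
  have p2: "Pe e (2*j+2) = \<kappa> * tt (Suc j)" for j by (simp add: Pe_def) (simp add: \<kappa>_def algebra_simps)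
  have p3: "Pe e (2*j+3) = \<i> * tt (Suc j) + e * tt (Suc (Suc j))" for j
  proof -
    have ar: "2*j+3 = Suc (Suc (Suc (2*j)))" by simp
    show ?thesis unfolding Pe_def ar by simp
  qed
  have orel: "Pe e (2*j+1) = (\<i>/\<kappa>) * Pe e (2*j) + (e/\<kappa>) * Pe e (2*j+2)" for j
    unfolding p0 p1 p2 using k0 by (simp add: field_simps)
  have "det (hk (2*N+1) (2*N+1) (Pe e)) = det (hk (N+1) (N+1) (\<lambda>j. Pe e (2*j))) *
     det (hk N N (\<lambda>j. Pe e (2*j+2) - (\<i>/\<kappa>) * Pe e (2*j+1) - (e/\<kappa>) * Pe e (2*j+3)))"
    by (rule det_elim[OF _ _ orel]) auto
  also have "(\<lambda>j. Pe e (2*j)) = (\<lambda>j. \<kappa> * tt j)" by (rule ext) (rule p0)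
  also have "(\<lambda>j. Pe e (2*j+2) - (\<i>/\<kappa>) * Pe e (2*j+1) - (e/\<kappa>) * Pe e (2*j+3)) = (\<lambda>j. (-1/\<kappa>) * Vs j)"
  proof
    fix j
    have v: "Vs j = tt (Suc (Suc j)) - tt j" by (simp add: Vs_def)
    show "Pe e (2*j+2) - (\<i>/\<kappa>) * Pe e (2*j+1) - (e/\<kappa>) * Pe e (2*j+3) = (-1/\<kappa>) * Vs j"
      unfolding p1 p2 p3 v using k0 e by (auto simp: field_simps \<kappa>_def)
  qed
  finally show ?thesis by (simp only: det_hk_smult \<kappa>_def mult.assoc)
qed

lemma hk_eqI: "(\<And>j. f j = g j) \<Longrightarrow> hk r c f = hk r c g"
  by (metis ext)

lemma hk_zero: "hk r c (\<lambda>j. 0) = 0\<^sub>m r c"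
  by (rule eq_matI) auto

lemma P_even:
  assumes e: "e = 1 \<or> e = -1"
  shows "det (hk (2*N) (2*N) (Pe e)) = det (hk N N (Pe e)) * det (hk N N (Pe (-e)))"
proof -
  define \<kappa> where "\<kappa> = 1 + \<i>*e"
  have k0: "\<kappa> \<noteq> 0" using e by (auto simp: \<kappa>_def complex_eq_iff)
  have p0: "Pe e (2*j) = \<kappa> * tt j" for j by (simp add: Pe_def) (simp add: \<kappa>_def algebra_simps)
  have p1: "Pe e (2*j+1) = \<i> * tt j + e * tt (Suc j)" for j by (simp add: Pe_def)
  have p2: "Pe e (2*j+2) = \<kappa> * tt (Suc j)" for j by (simp add: Pe_def) (simp add: \<kappa>_def algebra_simps)
  let ?A0 = "hk N N (\<lambda>j. \<kappa> * tt j)"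
  let ?B0 = "hk N N (\<lambda>j. \<i> * tt j + e * tt (Suc j))"
  let ?D0 = "hk N N (\<lambda>j. \<kappa> * tt (Suc j))"
  have s0: "det (hk (2*N) (2*N) (Pe e)) = det (four_block_mat ?A0 ?B0 ?B0 ?D0)"
    using hk_split[of N "2*N" N "Pe e"] p0 p1 p2 by simp
  let ?B1 = "hk N N (\<lambda>j. e * tt (Suc j))"
  let ?D1 = "hk N N (\<lambda>j. -(\<i>/\<kappa>) * (\<i> * tt j + e * tt (Suc j)) + \<kappa> * tt (Suc j))"
  have s1: "det (four_block_mat ?A0 ?B0 ?B0 ?D0) = det (four_block_mat ?A0 ?B1 ?B0 ?D1)"
  proof -
    have "det (four_block_mat ?A0 ?B0 ?B0 ?D0) = det (four_block_mat ?A0 (?A0 * (-(\<i>/\<kappa>) \<cdot>\<^sub>m 1\<^sub>m N) + ?B0) ?B0 (?B0 * (-(\<i>/\<kappa>) \<cdot>\<^sub>m 1\<^sub>m N) + ?D0))"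
      by (rule det_colU) auto
    also have "?A0 * (-(\<i>/\<kappa>) \<cdot>\<^sub>m 1\<^sub>m N) + ?B0 = ?B1"
      unfolding mult_smult_one_right[OF hk_carrier] hk_smult hk_add
      by (rule hk_eqI) (use k0 in \<open>simp add: field_simps\<close>)
    also have "?B0 * (-(\<i>/\<kappa>) \<cdot>\<^sub>m 1\<^sub>m N) + ?D0 = ?D1"
      unfolding mult_smult_one_right[OF hk_carrier] hk_smult hk_add by simp
    finally show ?thesis .
  qed
  let ?C2 = "hk N N (\<lambda>j. e * tt (Suc j))"
  let ?D2 = "hk N N (\<lambda>j. tt j / \<kappa>)"
  have s2: "det (four_block_mat ?A0 ?B1 ?B0 ?D1) = det (four_block_mat ?A0 ?B1 ?C2 ?D2)"
  proof -
    have "det (four_block_mat ?A0 ?B1 ?B0 ?D1) = det (four_block_mat ?A0 ?B1 ((-(\<i>/\<kappa>) \<cdot>\<^sub>m 1\<^sub>m N) * ?A0 + ?B0) ((-(\<i>/\<kappa>) \<cdot>\<^sub>m 1\<^sub>m N) * ?B1 + ?D1))"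
      by (rule det_rowL) auto
    also have "(-(\<i>/\<kappa>) \<cdot>\<^sub>m 1\<^sub>m N) * ?A0 + ?B0 = ?C2"
      unfolding mult_smult_one_left[OF hk_carrier] hk_smult hk_add
      by (rule hk_eqI) (use k0 in \<open>simp add: field_simps\<close>)
    also have "(-(\<i>/\<kappa>) \<cdot>\<^sub>m 1\<^sub>m N) * ?B1 + ?D1 = ?D2"
      unfolding mult_smult_one_left[OF hk_carrier] hk_smult hk_add
      by (rule hk_eqI) (use k0 e in \<open>auto simp add: field_simps \<kappa>_def algebra_simps\<close>)
    finally show ?thesis .
  qed
  let ?A3 = "hk N N (\<lambda>j. \<kappa> * Pe e j)"
  let ?C3 = "hk N N (Pe e)"
  have s3: "det (four_block_mat ?A0 ?B1 ?C2 ?D2) = det (four_block_mat ?A3 ?B1 ?C3 ?D2)"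
  proof -
    have "det (four_block_mat ?A0 ?B1 ?C2 ?D2) = det (four_block_mat (?A0 + ?B1 * (\<kappa> \<cdot>\<^sub>m 1\<^sub>m N)) ?B1 (?C2 + ?D2 * (\<kappa> \<cdot>\<^sub>m 1\<^sub>m N)) ?D2)"
      by (rule det_colL) auto
    also have "?A0 + ?B1 * (\<kappa> \<cdot>\<^sub>m 1\<^sub>m N) = ?A3"
      unfolding mult_smult_one_right[OF hk_carrier] hk_smult hk_add
      by (rule hk_eqI) (simp add: Pe_def algebra_simps)
    also have "?C2 + ?D2 * (\<kappa> \<cdot>\<^sub>m 1\<^sub>m N) = ?C3"
      unfolding mult_smult_one_right[OF hk_carrier] hk_smult hk_add
      by (rule hk_eqI) (use k0 in \<open>simp add: Pe_def algebra_simps\<close>)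
    finally show ?thesis .
  qed
  let ?D4 = "hk N N (\<lambda>j. (1/\<kappa>) * Pe (-e) j)"
  have s4: "det (four_block_mat ?A3 ?B1 ?C3 ?D2) = det (four_block_mat ?A3 ?B1 (0\<^sub>m N N) ?D4)"
  proof -
    have "det (four_block_mat ?A3 ?B1 ?C3 ?D2) = det (four_block_mat ?A3 ?B1 ((-(1/\<kappa>) \<cdot>\<^sub>m 1\<^sub>m N) * ?A3 + ?C3) ((-(1/\<kappa>) \<cdot>\<^sub>m 1\<^sub>m N) * ?B1 + ?D2))"
      by (rule det_rowL) auto
    also have "(-(1/\<kappa>) \<cdot>\<^sub>m 1\<^sub>m N) * ?A3 + ?C3 = 0\<^sub>m N N"
      unfolding mult_smult_one_left[OF hk_carrier] hk_smult hk_add hk_zero[symmetric]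
      by (rule hk_eqI) (use k0 in simp)
    also have "(-(1/\<kappa>) \<cdot>\<^sub>m 1\<^sub>m N) * ?B1 + ?D2 = ?D4"
      unfolding mult_smult_one_left[OF hk_carrier] hk_smult hk_add
      by (rule hk_eqI) (use k0 in \<open>simp add: Pe_def field_simps\<close>)
    finally show ?thesis .
  qed
  have s5: "det (four_block_mat ?A3 ?B1 (0\<^sub>m N N) ?D4) = det ?A3 * det ?D4"
    by (rule det_four_block_mat_lower_left_zero) auto
  also have "\<dots> = det (hk N N (Pe e)) * det (hk N N (Pe (-e)))"
    unfolding det_hk_smult using k0 by (simp add: power_one_over field_simps)
  finally show ?thesis using s0 s1 s2 s3 s4 by simp
qed

lemma pm_prod: "((1+\<i>)^k * (-\<i>)^d) * ((1-\<i>)^k * \<i>^d) = (2::complex)^k"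
proof -
  have "((1+\<i>)^k * (-\<i>)^d) * ((1-\<i>)^k * \<i>^d) = ((1+\<i>)*(1-\<i>))^k * ((-\<i>)*\<i>)^d"
    by (simp only: power_mult_distrib mult_ac)
  also have "(1+\<i>)*(1-\<i>) = (2::complex)" by (simp add: algebra_simps)
  also have "(-\<i>)*\<i> = (1::complex)" by simp
  finally show ?thesis by simp
qed

lemma a1: "(1+\<i>)^(2*N) * (-\<i>)^N = (2::complex)^N"
proof -
  have "(1+\<i>)^(2*N) * (-\<i>)^N = ((1+\<i>)^2 * (-\<i>))^N" by (simp only: power_mult power_mult_distrib)
  also have "(1+\<i>)^2 * (-\<i>) = (2::complex)" by (simp add: power2_eq_square algebra_simps)
  finally show ?thesis .
qed

lemma a2: "(1-\<i>)^(2*N) * \<i>^N = (2::complex)^N"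
proof -
  have "(1-\<i>)^(2*N) * \<i>^N = ((1-\<i>)^2 * \<i>)^N" by (simp only: power_mult power_mult_distrib)
  also have "(1-\<i>)^2 * \<i> = (2::complex)" by (simp add: power2_eq_square algebra_simps)
  finally show ?thesis .
qed

lemma a3: "(c::complex) \<noteq> 0 \<Longrightarrow> c^(N+1) * (-1/c)^N = c * (-1)^N"
proof -
  assume c: "c \<noteq> 0"
  have "c^(N+1) * (-1/c)^N = c * (c * (-1/c))^N"
    by (simp only: Suc_eq_plus1[symmetric] power_Suc power_mult_distrib mult.assoc)
  also have "c * (-1/c) = -1" using c by simp
  finally show ?thesis .
qed

lemma main_closed:
  "det (hk n n (Pe 1)) = (1+\<i>)^n * (-\<i>)^(n div 2) \<and>
   det (hk n n (Pe (-1))) = (1-\<i>)^n * \<i>^(n div 2) \<and>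
   det (hk (n+1) (n+1) tt) * det (hk n n Vs) = (-2)^n"
proof (induction n rule: less_induct)
  case (less n)
  define PP where "PP k = det (hk k k (Pe 1))" for k
  define MM where "MM k = det (hk k k (Pe (-1)))" for k
  define W where "W k = det (hk (k+1) (k+1) tt) * det (hk k k Vs)" for k
  have PM: "PP k * MM k = 2^k" if "k < n" for k
    using less.IH[OF that] pm_prod[of k "k div 2"] unfolding PP_def MM_def by simp
  have Wdef2: "W (2*N) = (-1)^N * PP N * MM N * W N" for N
  proof -
    have "det (hk (2*N+1) (2*N+1) tt) = det (hk (N+1) (N+1) tt) * PP N"
      using T_rec[of "2*N+1"] unfolding PP_def by simp
    moreover have "det (hk (2*N) (2*N) Vs) = (-1)^N * MM N * det (hk N N Vs)"
      using V_rec[of "2*N"] unfolding MM_def by simp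
    ultimately show ?thesis unfolding W_def by (simp add: algebra_simps)
  qed
  have Wdef3: "W (2*N+1) = (-1)^(N+1) * PP (N+1) * MM (N+1) * W N" for N
  proof -
    have "det (hk (2*N+2) (2*N+2) tt) = det (hk (N+1) (N+1) tt) * PP (N+1)"
      using T_rec[of "2*N+2"] unfolding PP_def by simp
    moreover have "det (hk (2*N+1) (2*N+1) Vs) = (-1)^(N+1) * MM (N+1) * det (hk N N Vs)"
      using V_rec[of "2*N+1"] unfolding MM_def by simp
    ultimately show ?thesis unfolding W_def by (simp add: algebra_simps)
  qed
  have i1: "1 + \<i> \<noteq> 0" "1 - \<i> \<noteq> 0" by (auto simp: complex_eq_iff)
  obtain N where nN: "n = 2*N \<or> n = 2*N+1" by (metis dvd_mult_div_cancel odd_two_times_div_two_succ)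
  show ?case
  proof (cases "n = 0")
    case True
    have t1: "det (hk 1 1 tt) = 1" by (subst det_single) auto
    show ?thesis using True t1 by simp
  next
    case n0: False
    show ?thesis
    proof (cases "n = 2*N")
      case True
      then have Nn: "N < n" using n0 by simp
      have P: "PP n = 2^N"
        using P_even[of 1 N] PM[OF Nn] True unfolding PP_def MM_def by simp
      have M: "MM n = 2^N"
        using P_even[of "-1" N] PM[OF Nn] True unfolding PP_def MM_def by (simp add: mult.commute)
      have Wn: "W N = (-2)^N" using less.IH[OF Nn] unfolding W_def by simp
      have W: "W n = (-2)^n"
      proof -
        have "W n = (-1)^N * 2^N * (-2)^N" using Wdef2[of N] PM[OF Nn] Wn True by (simp add: mult.assoc)
        also have "\<dots> = (-2)^n" unfolding True
          by (simp add: power_mult power_mult_distrib[symmetric] power2_eq_square)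
        finally show ?thesis .
      qed
      show ?thesis using P M W a1[of N] a2[of N] True unfolding PP_def MM_def W_def by simp
    next
      case False
      then have nodd: "n = 2*N+1" using nN by simp
      then have Nn: "N < n" by simp
      have Wn: "W N = (-2)^N" using less.IH[OF Nn] unfolding W_def by simp
      have P: "PP n = (1+\<i>) * 2^N"
      proof -
        have "PP n = (1+\<i>)^(N+1) * (-1/(1+\<i>))^N * W N"
          using P_odd[of 1 N] nodd unfolding PP_def W_def by (simp add: mult_ac)
        also have "\<dots> = (1+\<i>) * ((-1)^N * (-2)^N)" unfolding Wn a3[OF i1(1)] by (simp add: mult_ac)
        also have "(-1)^N * (-2)^N = (2::complex)^N" by (simp add: power_mult_distrib[symmetric])
        finally show ?thesis .
      qed
      have M: "MM n = (1-\<i>) * 2^N"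
      proof -
        have "MM n = (1-\<i>)^(N+1) * (-1/(1-\<i>))^N * W N"
          using P_odd[of "-1" N] nodd unfolding MM_def W_def by (simp add: mult_ac)
        also have "\<dots> = (1-\<i>) * ((-1)^N * (-2)^N)" unfolding Wn a3[OF i1(2)] by (simp add: mult_ac)
        also have "(-1)^N * (-2)^N = (2::complex)^N" by (simp add: power_mult_distrib[symmetric])
        finally show ?thesis .
      qed
      have PM1: "PP (N+1) * MM (N+1) = 2^(N+1)"
      proof (cases "N = 0")
        case True
        then have "PP (N+1) * MM (N+1) = PP n * MM n" using nodd by simp
        also have "\<dots> = ((1+\<i>) * 2^N) * ((1-\<i>) * 2^N)" unfolding P M ..
        also have "\<dots> = 2^(N+1)" using True by (simp add: algebra_simps)
        finally show ?thesis .
      next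
        case False
        then show ?thesis using PM[of "N+1"] nodd by simp
      qed
      have W: "W n = (-2)^n"
      proof -
        have "W n = (-1)^(N+1) * 2^(N+1) * (-2)^N" using Wdef3[of N] PM1 Wn nodd by (simp add: mult.assoc)
        also have "\<dots> = (-2)^n" unfolding nodd
          by (simp add: power_mult power_mult_distrib[symmetric] power2_eq_square)
        finally show ?thesis .
      qed
      have e1: "(1+\<i>)^n * (-\<i>)^(n div 2) = (1+\<i>) * 2^N"
        unfolding nodd using a1[of N] by (simp add: mult_ac)
      have e2: "(1-\<i>)^n * \<i>^(n div 2) = (1-\<i>) * 2^N"
        unfolding nodd using a2[of N] by (simp add: mult_ac)
      show ?thesis using P M W e1 e2 unfolding PP_def MM_def W_def by simp
    qed
  qed
qed

theorem mainTheorem20: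
  fixes n :: nat
  assumes "n \<ge> 1"
  shows "det (hankelH n) = (- \<i>) ^ (n div 2)"
proof -
  have f: "(\<lambda>k. tt k + tt (Suc k)) = Pe 1" by (rule ext) (simp add: Pe_def)
  have i1: "1 + \<i> \<noteq> 0" by (auto simp: complex_eq_iff)
  have "det (hankelH n) = (1 / (1 + \<i>)) ^ n * det (hk n n (Pe 1))"
    unfolding hankelH_eq f by simp
  also have "\<dots> = (1 / (1 + \<i>)) ^ n * ((1+\<i>)^n * (-\<i>)^(n div 2))"
    using main_closed[of n] by simp
  also have "\<dots> = ((1 / (1 + \<i>)) * (1+\<i>))^n * (-\<i>)^(n div 2)"
    by (simp only: power_mult_distrib mult.assoc)
  also have "(1 / (1 + \<i>)) * (1+\<i>) = 1" using i1 by simp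
  finally show ?thesis by simp
qed

end
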